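(* Let $\overline{\Gamma'}$ be the undirected graph with vertex set $\Z[\tfrac12]$ in which two distinct vertices $f,g$ are adjacent iff $|f-g|=2^i$ for some $i\in\Z$. For $n\ge1$ let $e(n)$ be the number of unordered pairs $\{x,y\}\subset\{1,\dots,n\}$ with $|x-y|$ a power of $2$ (equivalently $e(n)=kn-2^k+1$ where $2^{k-1}<n\leq2^k$). Then every subgraph $G$ of $\overline{\Gamma'}$ with $n$ vertices satisfies $|E(G)|\leq e(n)$. *)

theory Defs
  imports Complex_Main
begin

definition dyadic :: "rat \<Rightarrow> bool" where
  "dyadic q \<longleftrightarrow> (\<exists>a::int. \<exists>m::nat. q = of_int a / 2 ^ m)"

definition adj :: "rat \<Rightarrow> rat \<Rightarrow> bool" where
  "adj f g \<longleftrightarrow> f \<noteq> g \<and> (\<exists>i::int. \<bar>f - g\<bar> = 2 powi i)"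

definition e_num :: "nat \<Rightarrow> nat" where
  "e_num n = card {{x, y} | x y :: nat. x \<in> {1..n} \<and> y \<in> {1..n} \<and> x \<noteq> y \<and>
                      (\<exists>k::nat. (if x \<le> y then y - x else x - y) = 2 ^ k)}"

end

theory Submission
  imports Defs
begin

definition bl :: "nat \<Rightarrow> nat" where
  "bl m = card {k::nat. (2::nat) ^ k \<le> m}"

definition R :: "nat \<Rightarrow> nat" where
  "R n = (\<Sum>m<n. bl m)"

lemma bl_fin: "finite {k::nat. (2::nat) ^ k \<le> m}"
proof -
  have "{k::nat. (2::nat) ^ k \<le> m} \<subseteq> {..<m}"
    using less_le_trans[OF less_exp] by auto
  then show ?thesis using finite_subset by blast
qed

lemma bl_set_odd: "{k::nat. (2::nat) ^ k \<le> 2*j+1} = insert 0 (Suc ` {k. (2::nat) ^ k \<le> j})"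
proof (rule set_eqI)
  fix k show "k \<in> {k::nat. (2::nat) ^ k \<le> 2*j+1} \<longleftrightarrow> k \<in> insert 0 (Suc ` {k. (2::nat) ^ k \<le> j})"
    by (cases k) auto
qed

lemma bl_set_even: "j \<ge> 1 \<Longrightarrow> {k::nat. (2::nat) ^ k \<le> 2*j} = insert 0 (Suc ` {k. (2::nat) ^ k \<le> j})"
proof (rule set_eqI)
  fix k assume "j \<ge> 1"
  then show "k \<in> {k::nat. (2::nat) ^ k \<le> 2*j} \<longleftrightarrow> k \<in> insert 0 (Suc ` {k. (2::nat) ^ k \<le> j})"
    by (cases k) auto
qed

lemma card_ins_suc: "finite X \<Longrightarrow> card (insert 0 (Suc ` X)) = card X + 1"
  by (simp add: card_image image_iff)

lemma bl_odd: "bl (2*j+1) = bl j + 1"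
  unfolding bl_def bl_set_odd using card_ins_suc[OF bl_fin] by simp

lemma bl_even: "j \<ge> 1 \<Longrightarrow> bl (2*j) = bl j + 1"
  unfolding bl_def using bl_set_even card_ins_suc[OF bl_fin] by simp

lemma R_Suc: "R (Suc n) = R n + bl n"
  by (simp add: R_def)

lemma R_0: "R 0 = 0" by (simp add: R_def)

lemma bl_0: "bl 0 = 0" by (simp add: bl_def)

lemma R_rec: "n \<ge> 1 \<Longrightarrow> R n = R (n div 2) + R ((n+1) div 2) + n - 1"
proof (induction n rule: dec_induct)
  case base
  then show ?case by (simp add: R_Suc R_0 bl_0)
next
  case (step n)
  show ?case
  proof (cases "even n")
    case True
    then obtain p where p: "n = 2*p" by blast
    with step have "p \<ge> 1" by simp
    have "R (Suc n) = R n + bl n" by (rule R_Suc)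
    also have "\<dots> = R p + R p + 2*p - 1 + bl p + 1"
      using step.IH p bl_even[OF \<open>p \<ge> 1\<close>] by simp
    also have "\<dots> = R p + R (Suc p) + 2*p"
      using R_Suc[of p] \<open>p \<ge> 1\<close> by simp
    finally show ?thesis using p by simp
  next
    case False
    then obtain p where p: "n = 2*p+1" using oddE by blast
    have "R (Suc n) = R n + bl n" by (rule R_Suc)
    also have "\<dots> = R p + R (Suc p) + 2*p + bl p + 1"
      using step.IH p bl_odd by simp
    also have "\<dots> = R (Suc p) + R (Suc p) + 2*p + 1"
      using R_Suc[of p] by simp
    finally show ?thesis using p by simp
  qed
qed

definition cc :: "nat \<Rightarrow> nat \<Rightarrow> nat" where "cc a b = min (2 * min a b) (a + b - 1)"
lemma cc_ee: "cc (2*p) (2*q) \<le> 2 * cc p q + 1" unfolding cc_def by (cases "p \<le> q"; cases "p = 0"; cases "q = 0") (auto simp: min_def)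
lemma cc_oe: "q \<ge> 1 \<Longrightarrow> cc (2*p+1) (2*q) \<le> cc p q + cc (p+1) q + 1" unfolding cc_def by (cases "p \<le> q"; cases "p = 0"; cases "q = 0") (auto simp: min_def)
lemma cc_eo: "p \<ge> 1 \<Longrightarrow> cc (2*p) (2*q+1) \<le> cc p q + cc p (q+1) + 1" unfolding cc_def by (cases "p \<le> q"; cases "p = 0"; cases "q = 0") (auto simp: min_def)
lemma cc_oo: "cc (2*p+1) (2*q+1) \<le> cc p (q+1) + cc (p+1) q + 1" unfolding cc_def by (cases "p \<le> q"; cases "p = 0"; cases "q = 0") (auto simp: min_def)

lemma R_rec': "n \<ge> 1 \<Longrightarrow> R n + 1 = R (n div 2) + R ((n+1) div 2) + n"
  using R_rec[of n] by linarith

lemma R_F: "R a + R b + cc a b \<le> R (a + b)"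
proof (induction "a + b" arbitrary: a b rule: less_induct)
  case less
  show ?case
  proof (cases "a = 0 \<or> b = 0")
    case True
    then show ?thesis by (auto simp: R_0 cc_def)
  next
    case False
    then have a1: "a \<ge> 1" and b1: "b \<ge> 1" by auto
    have Ra: "R a + 1 = R (a div 2) + R ((a+1) div 2) + a" using R_rec' a1 by blast
    have Rb: "R b + 1 = R (b div 2) + R ((b+1) div 2) + b" using R_rec' b1 by blast
    have Rab: "R (a+b) + 1 = R ((a+b) div 2) + R ((a+b+1) div 2) + (a+b)" using R_rec'[of "a+b"] a1 by simp
    consider (ee) p q where "a = 2*p" "b = 2*q" | (oe) p q where "a = 2*p+1" "b = 2*q"
      | (eo) p q where "a = 2*p" "b = 2*q+1" | (oo) p q where "a = 2*p+1" "b = 2*q+1"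
      by (metis evenE oddE)
    then show ?thesis
    proof cases
      case ee
      have h1: "R p + R q + cc p q \<le> R (p + q)"
        using less(1)[of p q] ee a1 b1 by simp
      have "a div 2 = p" "(a+1) div 2 = p" "b div 2 = q" "(b+1) div 2 = q" "(a+b) div 2 = p+q" "(a+b+1) div 2 = p+q"
        using ee by presburger+
      then show ?thesis using h1 Ra Rb Rab ee cc_ee[of p q] by (simp only:)
    next
      case oe
      have h1: "R p + R q + cc p q \<le> R (p + q)"
        using less(1)[of p q] oe a1 b1 by simp
      have h2: "R (p+1) + R q + cc (p+1) q \<le> R (p + 1 + q)"
        using less(1)[of "p+1" q] oe a1 b1 by simp
      have "a div 2 = p" "(a+1) div 2 = p+1" "b div 2 = q" "(b+1) div 2 = q" "(a+b) div 2 = p+q" "(a+b+1) div 2 = p+1+q"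
        using oe by presburger+
      then show ?thesis using h1 h2 Ra Rb Rab oe cc_oe[of q p] b1 by (simp only:) linarith
    next
      case eo
      have h1: "R p + R q + cc p q \<le> R (p + q)"
        using less(1)[of p q] eo a1 b1 by simp
      have h2: "R p + R (q+1) + cc p (q+1) \<le> R (p + (q + 1))"
        using less(1)[of p "q+1"] eo a1 b1 by simp
      have "a div 2 = p" "(a+1) div 2 = p" "b div 2 = q" "(b+1) div 2 = q+1" "(a+b) div 2 = p+q" "(a+b+1) div 2 = p+(q+1)"
        using eo by presburger+
      then show ?thesis using h1 h2 Ra Rb Rab eo cc_eo[of p q] a1 by (simp only:) linarith
    next
      case oo
      have h1: "R p + R (q+1) + cc p (q+1) \<le> R (p + (q+1))"
        using less(1)[of p "q+1"] oo by simp
      have h2: "R (p+1) + R q + cc (p+1) q \<le> R (p + 1 + q)"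
        using less(1)[of "p+1" q] oo by simp
      have "a div 2 = p" "(a+1) div 2 = p+1" "b div 2 = q" "(b+1) div 2 = q+1" "(a+b) div 2 = p+(q+1)" "(a+b+1) div 2 = p+1+q"
        using oo by presburger+
      then show ?thesis using h1 h2 Ra Rb Rab oo cc_oo[of p q] by (simp only:)
    qed
  qed
qed

definition Pn :: "nat \<Rightarrow> nat set set" where "Pn n = {{x, y} | x y :: nat. x \<in> {1..n} \<and> y \<in> {1..n} \<and> x \<noteq> y \<and>
                      (\<exists>k::nat. (if x \<le> y then y - x else x - y) = 2 ^ k)}"
definition Nw :: "nat \<Rightarrow> nat set set" where "Nw n = (\<lambda>k. {Suc n - 2^k, Suc n}) ` {k. (2::nat) ^ k \<le> n}"

lemma Pn_sub: "Pn n \<subseteq> Pow {1..n}" unfolding Pn_def by auto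
lemma Pn_fin: "finite (Pn n)" using Pn_sub finite_subset by (metis finite_Pow_iff finite_atLeastAtMost)

lemma Pn_Suc: "Pn (Suc n) = Pn n \<union> Nw n"
proof
  show "Pn (Suc n) \<subseteq> Pn n \<union> Nw n"
  proof
    fix s assume "s \<in> Pn (Suc n)"
    then obtain x y k where s: "s = {x,y}" and x: "x \<in> {1..Suc n}" and y: "y \<in> {1..Suc n}" and xy: "x \<noteq> y"
      and k: "(if x \<le> y then y - x else x - y) = 2 ^ k" unfolding Pn_def by blast
    have "x \<le> n \<and> y \<le> n \<or> x = Suc n \<or> y = Suc n" using x y by auto
    then consider "x \<le> n \<and> y \<le> n" | "x = Suc n" | "y = Suc n" by blast
    then show "s \<in> Pn n \<union> Nw n"
    proof cases
      case 1
      then have "x \<in> {1..n}" "y \<in> {1..n}" using x y by auto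
      then show ?thesis using s xy k unfolding Pn_def by blast
    next
      case 2
      then have "x - y = 2^k" "y \<ge> 1" "y \<le> n" using k xy y by (auto split: if_splits)
      then have "2^k \<le> n" "y = Suc n - 2^k" using 2 by auto
      then show ?thesis using s 2 unfolding Nw_def by auto
    next
      case 3
      then have "y - x = 2^k" "x \<ge> 1" "x \<le> n" using k xy x by (auto split: if_splits)
      then have "2^k \<le> n" "x = Suc n - 2^k" using 3 by auto
      then show ?thesis using s 3 unfolding Nw_def by auto
    qed
  qed
next
  show "Pn n \<union> Nw n \<subseteq> Pn (Suc n)"
  proof
    fix s assume "s \<in> Pn n \<union> Nw n"
    then show "s \<in> Pn (Suc n)"
    proof
      assume "s \<in> Pn n" then show ?thesis unfolding Pn_def by fastforce
    next
      assume "s \<in> Nw n"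
      then obtain k where k: "2^k \<le> n" and s: "s = {Suc n - 2^k, Suc n}" unfolding Nw_def by auto
      have o: "(2::nat)^k \<ge> 1" by simp
      have ne: "Suc n - 2^k \<noteq> Suc n" using o k by linarith
      have "Suc n - 2^k \<in> {1..Suc n} \<and> Suc n \<in> {1..Suc n} \<and> Suc n - 2^k \<noteq> Suc n \<and>
          (if Suc n - 2^k \<le> Suc n then Suc n - (Suc n - 2^k) else Suc n - 2^k - Suc n) = 2^k"
        using k o ne by auto
      then show ?thesis unfolding Pn_def s by blast
    qed
  qed
qed

lemma Nw_card: "card (Nw n) = bl n"
proof -
  have "inj_on (\<lambda>k. {Suc n - 2^k, Suc n}) {k. (2::nat) ^ k \<le> n}"
  proof (rule inj_onI)
    fix a b assume a: "a \<in> {k. (2::nat) ^ k \<le> n}" and b: "b \<in> {k. (2::nat) ^ k \<le> n}"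
      and e: "{Suc n - 2^a, Suc n} = {Suc n - 2^b, Suc n}"
    have "(2::nat)^a \<ge> 1" "(2::nat)^b \<ge> 1" by simp_all
    then have "Suc n - 2^a = Suc n - 2^b" using e a b by (auto simp: doubleton_eq_iff)
    moreover have "(2::nat)^a \<le> Suc n" "(2::nat)^b \<le> Suc n" using a b by auto
    ultimately have "(2::nat)^a = 2^b" by (metis diff_diff_cancel)
    then show "a = b" by simp
  qed
  then show ?thesis unfolding Nw_def bl_def by (simp add: card_image)
qed

lemma e_num_Pn: "e_num n = card (Pn n)" unfolding e_num_def Pn_def by (rule refl)

lemma e_num_R: "e_num n = R n"
proof (induction n)
  case 0
  have "Pn 0 = {}" unfolding Pn_def by auto
  then show ?case by (simp add: e_num_Pn R_0)
next
  case (Suc n)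
  have d: "Pn n \<inter> Nw n = {}"
  proof (rule ccontr)
    assume "Pn n \<inter> Nw n \<noteq> {}"
    then obtain s where "s \<in> Pn n" "s \<in> Nw n" by blast
    then have "s \<subseteq> {1..n}" "Suc n \<in> s" using Pn_sub unfolding Nw_def by auto
    then show False by auto
  qed
  have fN: "finite (Nw n)" unfolding Nw_def using bl_fin by simp
  have "card (Pn (Suc n)) = card (Pn n) + card (Nw n)"
    unfolding Pn_Suc using card_Un_disjoint[OF Pn_fin fN d] by simp
  then show ?case using Suc Nw_card R_Suc by (simp add: e_num_Pn)
qed
definition Gi :: "int set \<Rightarrow> int set set" where
  "Gi S = {{x,y} | x y. x \<in> S \<and> y \<in> S \<and> x \<noteq> y \<and> (\<exists>k::nat. \<bar>x - y\<bar> = 2^k)}"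

lemma Gi_sub: "Gi S \<subseteq> Pow S" unfolding Gi_def by auto
lemma Gi_fin: "finite S \<Longrightarrow> finite (Gi S)" using Gi_sub finite_subset by (metis finite_Pow_iff)

lemma pow2_odd: "odd ((2::int)^k) \<Longrightarrow> k = 0"
  by (cases k) auto

lemma cross:
  assumes fin: "finite S"
  defines "A \<equiv> {x\<in>S. even x}" and "B \<equiv> {x\<in>S. odd x}"
  shows "card (Gi S) \<le> card (Gi A) + card (Gi B) + cc (card A) (card B)"
proof -
  define C where "C = {{x,y} | x y. x \<in> A \<and> y \<in> B \<and> \<bar>x - y\<bar> = 1}"
  have fA: "finite A" and fB: "finite B" using fin unfolding A_def B_def by auto
  have sub: "Gi S \<subseteq> Gi A \<union> Gi B \<union> C"
  proof
    fix s assume "s \<in> Gi S"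
    then obtain x y k where s: "s = {x,y}" and xy: "x \<in> S" "y \<in> S" "x \<noteq> y" and k: "\<bar>x - y\<bar> = 2^k"
      unfolding Gi_def by blast
    show "s \<in> Gi A \<union> Gi B \<union> C"
    proof (cases "even x = even y")
      case True
      then show ?thesis
      proof (cases "even x")
        case True
        then have "x \<in> A" "y \<in> A" using xy \<open>even x = even y\<close> unfolding A_def by auto
        then show ?thesis using s xy k unfolding Gi_def by blast
      next
        case False
        then have "x \<in> B" "y \<in> B" using xy \<open>even x = even y\<close> unfolding B_def by auto
        then show ?thesis using s xy k unfolding Gi_def by blast
      qed
    next
      case False
      then have "odd (x - y)" by auto
      then have "odd \<bar>x - y\<bar>" by simp
      then have "k = 0" using k pow2_odd by metis
      then have one: "\<bar>x - y\<bar> = 1" using k by simp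
      show ?thesis
      proof (cases "even x")
        case True
        then have "x \<in> A" "y \<in> B" using xy False unfolding A_def B_def by auto
        then show ?thesis using s one unfolding C_def by blast
      next
        case F2: False
        then have "y \<in> A" "x \<in> B" using xy False unfolding A_def B_def by auto
        moreover have "s = {y,x}" "\<bar>y - x\<bar> = 1" using s one by auto
        ultimately show ?thesis unfolding C_def by blast
      qed
    qed
  qed
  have c1: "card C \<le> 2 * card A"
  proof -
    have "C \<subseteq> (\<lambda>x. {x,x+1}) ` A \<union> (\<lambda>x. {x-1,x}) ` A"
    proof
      fix s assume "s \<in> C"
      then obtain x y where "s = {x,y}" "x \<in> A" "\<bar>x - y\<bar> = 1" unfolding C_def by blast
      then have "s = {x,x+1} \<or> s = {x-1,x}" by (auto simp: abs_if split: if_splits)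
      then show "s \<in> (\<lambda>x. {x,x+1}) ` A \<union> (\<lambda>x. {x-1,x}) ` A" using \<open>x \<in> A\<close> by blast
    qed
    then have "card C \<le> card ((\<lambda>x. {x,x+1}) ` A \<union> (\<lambda>x. {x-1,x}) ` A)"
      using fA by (intro card_mono) auto
    also have "\<dots> \<le> card ((\<lambda>x. {x,x+1}) ` A) + card ((\<lambda>x. {x-1,x}) ` A)" by (rule card_Un_le)
    also have "\<dots> \<le> card A + card A" using card_image_le[OF fA] add_mono by metis
    finally show ?thesis by simp
  qed
  have c2: "card C \<le> 2 * card B"
  proof -
    have "C \<subseteq> (\<lambda>x. {x,x+1}) ` B \<union> (\<lambda>x. {x-1,x}) ` B"
    proof
      fix s assume "s \<in> C"
      then obtain x y where "s = {x,y}" "y \<in> B" "\<bar>x - y\<bar> = 1" unfolding C_def by blast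
      then have "s = {y,y+1} \<or> s = {y-1,y}" by (auto simp: abs_if split: if_splits)
      then show "s \<in> (\<lambda>x. {x,x+1}) ` B \<union> (\<lambda>x. {x-1,x}) ` B" using \<open>y \<in> B\<close> by blast
    qed
    then have "card C \<le> card ((\<lambda>x. {x,x+1}) ` B \<union> (\<lambda>x. {x-1,x}) ` B)"
      using fB by (intro card_mono) auto
    also have "\<dots> \<le> card ((\<lambda>x. {x,x+1}) ` B) + card ((\<lambda>x. {x-1,x}) ` B)" by (rule card_Un_le)
    also have "\<dots> \<le> card B + card B" using card_image_le[OF fB] add_mono by metis
    finally show ?thesis by simp
  qed
  have SAB: "S = A \<union> B" "A \<inter> B = {}" unfolding A_def B_def by auto
  have cS: "card S = card A + card B" using SAB card_Un_disjoint[OF fA fB] by simp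
  have c3: "card C \<le> card S - 1"
  proof (cases "S = {}")
    case True
    then have "C = {}" unfolding C_def A_def by auto
    then show ?thesis by simp
  next
    case False
    have "C \<subseteq> (\<lambda>x. {x,x+1}) ` (S - {Max S})"
    proof
      fix s assume "s \<in> C"
      then obtain x y where s: "s = {x,y}" "x \<in> S" "y \<in> S" "\<bar>x - y\<bar> = 1" unfolding C_def A_def B_def by blast
      have mx: "x \<le> Max S" "y \<le> Max S" using s fin by auto
      show "s \<in> (\<lambda>x. {x,x+1}) ` (S - {Max S})"
      proof (cases "y = x + 1")
        case True
        then have "x \<in> S - {Max S}" using s mx by auto
        then show ?thesis using s True by blast
      next
        case False
        then have "x = y + 1" using s by (auto simp: abs_if split: if_splits)
        then have "y \<in> S - {Max S}" "s = {y, y+1}" using s mx by auto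
        then show ?thesis by blast
      qed
    qed
    then have "card C \<le> card ((\<lambda>x. {x,x+1}) ` (S - {Max S}))"
      using fin by (intro card_mono) auto
    also have "\<dots> \<le> card (S - {Max S})" using fin by (intro card_image_le) auto
    also have "\<dots> = card S - 1" using fin False by simp
    finally show ?thesis .
  qed
  have cC: "card C \<le> cc (card A) (card B)"
    unfolding cc_def using c1 c2 c3 cS by simp
  have fC: "finite C" using c3 card_eq_0_iff
  proof -
    have "C \<subseteq> Pow S" unfolding C_def A_def B_def by auto
    then show ?thesis using fin finite_subset by (metis finite_Pow_iff)
  qed
  have "card (Gi S) \<le> card (Gi A \<union> Gi B \<union> C)"
    using sub Gi_fin[OF fA] Gi_fin[OF fB] fC by (intro card_mono) auto
  also have "\<dots> \<le> card (Gi A) + card (Gi B) + card C"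
    by (meson add_mono card_Un_le le_trans order_refl)
  finally show ?thesis using cC by linarith
qed
lemma halve:
  assumes fin: "finite S" and ne: "S \<noteq> {}" and par: "\<forall>x\<in>S. even (x - Min S)"
    and bd: "\<forall>x\<in>S. x \<le> Min S + int D"
  defines "h \<equiv> \<lambda>x. (x - Min S) div 2"
  shows "card (h ` S) = card S" "card (Gi S) \<le> card (Gi (h ` S))"
    "h ` S \<noteq> {}" "finite (h ` S)" "\<forall>x\<in>h ` S. x \<le> Min (h ` S) + int (D div 2)"
proof -
  have mS: "Min S \<in> S" using fin ne by simp
  have le: "\<forall>x\<in>S. Min S \<le> x" using fin by simp
  have hx: "\<And>x. x \<in> S \<Longrightarrow> x = 2 * h x + Min S" unfolding h_def using par by fastforce
  have inj: "inj_on h S"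
  proof (rule inj_onI)
    fix x y assume "x \<in> S" "y \<in> S" "h x = h y"
    then show "x = y" using hx by metis
  qed
  then show "card (h ` S) = card S" by (simp add: card_image)
  show "h ` S \<noteq> {}" using ne by simp
  show fh: "finite (h ` S)" using fin by simp
  have h0: "h (Min S) = 0" unfolding h_def by simp
  have hge: "\<forall>y\<in>h ` S. 0 \<le> y" using le unfolding h_def by auto
  have "Min (h ` S) = 0"
    using h0 hge mS fh by (metis Min_eqI image_eqI)
  moreover have "\<forall>y\<in>h ` S. y \<le> int (D div 2)"
  proof
    fix y assume "y \<in> h ` S"
    then obtain x where x: "x \<in> S" "y = h x" by blast
    have "x - Min S \<le> int D" using bd x by auto
    then have "(x - Min S) div 2 \<le> int D div 2" by (simp add: zdiv_mono1)
    then show "y \<le> int (D div 2)" using x unfolding h_def by (simp add: zdiv_int)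
  qed
  ultimately show "\<forall>x\<in>h ` S. x \<le> Min (h ` S) + int (D div 2)" by simp
  have maps: "(\<lambda>s. h ` s) ` Gi S \<subseteq> Gi (h ` S)"
  proof
    fix t assume "t \<in> (\<lambda>s. h ` s) ` Gi S"
    then obtain x y k where t: "t = h ` {x,y}" and xy: "x \<in> S" "y \<in> S" "x \<noteq> y" and k: "\<bar>x - y\<bar> = 2^k"
      unfolding Gi_def by blast
    have gen: "\<And>a b u v m::int. u = 2*a+m \<Longrightarrow> v = 2*b+m \<Longrightarrow> u - v = 2*(a-b)" by simp
    have d: "x - y = 2 * (h x - h y)" using gen[OF hx[OF xy(1)] hx[OF xy(2)]] .
    have "k \<noteq> 0"
    proof
      assume "k = 0"
      then have "\<bar>x - y\<bar> = 1" using k by simp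
      then show False using d by presburger
    qed
    then obtain j where j: "k = Suc j" using not0_implies_Suc by blast
    have "2 * \<bar>h x - h y\<bar> = 2 * 2^j" using k d j by (simp add: abs_mult)
    then have "\<bar>h x - h y\<bar> = 2^j" by simp
    moreover have "h x \<noteq> h y" using inj xy by (meson inj_on_contraD)
    ultimately show "t \<in> Gi (h ` S)" using t xy unfolding Gi_def by auto
  qed
  have "inj_on (\<lambda>s. h ` s) (Gi S)"
  proof (rule inj_onI)
    fix s t assume "s \<in> Gi S" "t \<in> Gi S" "h ` s = h ` t"
    then show "s = t" using Gi_sub inj inj_on_image_eq_iff by (metis PowD subsetD)
  qed
  then have "card (Gi S) = card ((\<lambda>s. h ` s) ` Gi S)" by (simp add: card_image)
  also have "\<dots> \<le> card (Gi (h ` S))" using maps Gi_fin[OF fh] by (rule card_mono[rotated])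
  finally show "card (Gi S) \<le> card (Gi (h ` S))" .
qed

lemma Gi_small: "finite S \<Longrightarrow> card S \<le> 1 \<Longrightarrow> Gi S = {}"
proof -
  assume f: "finite S" and c: "card S \<le> 1"
  { fix x y assume "x \<in> S" "y \<in> S" "x \<noteq> y"
    then have "card {x,y} \<le> card S" using f by (intro card_mono) auto
    then have False using c \<open>x \<noteq> y\<close> by simp }
  then show ?thesis unfolding Gi_def by blast
qed

lemma main_int: "finite S \<Longrightarrow> card (Gi S) \<le> R (card S)"
proof (induction "card S" arbitrary: S rule: less_induct)
  case less
  note outer = less.hyps
  have inner: "\<And>T. finite T \<Longrightarrow> T \<noteq> {} \<Longrightarrow> card T = card S \<Longrightarrow> \<forall>x\<in>T. x \<le> Min T + int D
     \<Longrightarrow> card (Gi T) \<le> R (card T)" for D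
  proof (induction D rule: less_induct)
    case (less D T)
    show ?case
    proof (cases "card T \<le> 1")
      case True
      then show ?thesis using Gi_small less.prems by simp
    next
      case big: False
      show ?thesis
      proof (cases "\<forall>x\<in>T. even (x - Min T)")
        case True
        define h where "h = (\<lambda>x. (x - Min T) div 2)"
        note H = halve[OF less.prems(1,2) True less.prems(4), folded h_def]
        have "D \<noteq> 0"
        proof
          assume "D = 0"
          moreover have "\<forall>x\<in>T. Min T \<le> x" using less.prems(1) by simp
          ultimately have "T \<subseteq> {Min T}" using less.prems(4) by force
          then have "card T \<le> card {Min T}" by (intro card_mono) auto
          then have "card T \<le> 1" by simp
          then show False using big by simp
        qed
        then have "D div 2 < D" by simp
        then have "card (Gi (h ` T)) \<le> R (card (h ` T))"
          using less.IH[OF _ H(4) H(3) _ H(5)] H(1) less.prems(3) by simp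
        then show ?thesis using H(1,2) by simp
      next
        case False
        then obtain x where x: "x \<in> T" "odd (x - Min T)" by blast
        have mT: "Min T \<in> T" using less.prems(1,2) by simp
        define A where "A = {x\<in>T. even x}"
        define B where "B = {x\<in>T. odd x}"
        have "A \<noteq> {}" "B \<noteq> {}" using x mT unfolding A_def B_def by (cases "even x"; auto)+
        have fA: "finite A" and fB: "finite B" using less.prems(1) unfolding A_def B_def by auto
        have SAB: "T = A \<union> B" "A \<inter> B = {}" unfolding A_def B_def by auto
        have cS: "card T = card A + card B" using SAB card_Un_disjoint[OF fA fB] by simp
        have "card A \<noteq> 0" "card B \<noteq> 0" using fA fB \<open>A \<noteq> {}\<close> \<open>B \<noteq> {}\<close> by auto
        then have "card A < card S" "card B < card S" using cS less.prems(3) by auto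
        then have "card (Gi A) \<le> R (card A)" "card (Gi B) \<le> R (card B)" using outer[OF _ fA] outer[OF _ fB] by auto
        moreover have "card (Gi T) \<le> card (Gi A) + card (Gi B) + cc (card A) (card B)"
          using cross[OF less.prems(1)] unfolding A_def B_def by simp
        moreover have "R (card A) + R (card B) + cc (card A) (card B) \<le> R (card T)"
          using R_F cS by simp
        ultimately show ?thesis by linarith
      qed
    qed
  qed
  show ?case
  proof (cases "S = {}")
    case True
    then show ?thesis using Gi_small by simp
  next
    case False
    have "Min S \<le> Max S" using less.prems False by simp
    moreover have "\<forall>x\<in>S. x \<le> Max S" using less.prems by simp
    ultimately have "\<forall>x\<in>S. x \<le> Min S + int (nat (Max S - Min S))" by auto
    then show ?thesis using inner less.prems False by blast
  qed
qed
lemma powi_int: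
  assumes "(2::rat) powi i * 2 ^ M = of_int d"
  shows "\<exists>k::nat. d = 2 ^ k"
proof -
  have e: "(2::rat) powi (i + int M) = of_int d"
    using assms by (simp add: power_int_add)
  show ?thesis
  proof (cases "i + int M \<ge> 0")
    case True
    then obtain k where k: "i + int M = int k" using nonneg_int_cases by blast
    then have "(of_int d :: rat) = of_int (2 ^ k)" using e by simp
    then show ?thesis by (metis of_int_eq_iff)
  next
    case False
    then obtain k where k: "i + int M = - int k" "k > 0"
      by (metis neg_int_cases neg_0_less_iff_less of_nat_0_less_iff zero_less_Suc not_le)
    then have "inverse ((2::rat) ^ k) = of_int d" using e by (simp add: power_int_minus)
    then have "(of_int d :: rat) * 2 ^ k = 1" by (simp add: field_simps)
    then have "(of_int (d * 2 ^ k) :: rat) = of_int 1" by simp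
    then have "d * 2 ^ k = 1" using of_int_eq_iff by blast
    then have "(2::int) ^ k dvd 1" by (metis dvd_triv_right)
    then have "(2::int) ^ k = 1" by simp
    moreover have "(2::int)^k > 1" using k by (simp add: one_less_power)
    ultimately show ?thesis by linarith
  qed
qed

theorem mainTheorem7:
  fixes V :: "rat set" and E :: "rat set set" and n :: nat
  assumes "n \<ge> 1"
    and "finite V" and "card V = n"
    and "\<forall>v\<in>V. dyadic v"
    and "\<forall>edge\<in>E. \<exists>f g. edge = {f, g} \<and> f \<in> V \<and> g \<in> V \<and> adj f g"
  shows "card E \<le> e_num n"
proof -
  have "\<forall>v\<in>V. \<exists>m::nat. \<exists>a::int. v * 2 ^ m = of_int a"
  proof
    fix v assume "v \<in> V"
    then obtain a :: int and m :: nat where "v = of_int a / 2 ^ m" using assms(4) unfolding dyadic_def by blast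
    then have "v * 2 ^ m = of_int a" by simp
    then show "\<exists>m::nat. \<exists>a::int. v * 2 ^ m = of_int a" by blast
  qed
  from bchoice[OF this] obtain mm where mm: "\<forall>v\<in>V. \<exists>a::int. v * 2 ^ mm v = of_int a" by blast
  define M where "M = (\<Sum>v\<in>V. mm v)"
  have "\<forall>v\<in>V. \<exists>a::int. v * 2 ^ M = of_int a"
  proof
    fix v assume v: "v \<in> V"
    then obtain a :: int where a: "v * 2 ^ mm v = of_int a" using mm by blast
    have "mm v \<le> M" unfolding M_def using v assms(2) by (intro member_le_sum) auto
    then obtain j where j: "M = mm v + j" using le_Suc_ex by blast
    have "v * 2 ^ M = (v * 2 ^ mm v) * 2 ^ j" unfolding j by (simp add: power_add)
    also have "\<dots> = of_int (a * 2 ^ j)" using a by simp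
    finally show "\<exists>a::int. v * 2 ^ M = of_int a" by blast
  qed
  define h where "h = (\<lambda>v::rat. \<lfloor>v * 2 ^ M\<rfloor>)"
  have hv: "(of_int (h v) :: rat) = v * 2 ^ M" if v: "v \<in> V" for v
  proof -
    obtain a :: int where a: "v * 2 ^ M = of_int a" using v \<open>\<forall>v\<in>V. \<exists>a::int. v * 2 ^ M = of_int a\<close> by blast
    then have "h v = a" unfolding h_def by simp
    then show ?thesis using a by simp
  qed
  have inj: "inj_on h V"
  proof (rule inj_onI)
    fix x y assume xy: "x \<in> V" "y \<in> V" "h x = h y"
    have "x * 2 ^ M = of_int (h x)" using hv[OF xy(1)] by (rule sym)
    also have "\<dots> = of_int (h y)" using xy(3) by (rule arg_cong)
    also have "\<dots> = y * 2 ^ M" by (rule hv[OF xy(2)])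
    finally have "x * 2 ^ M = y * 2 ^ M" .
    then show "x = y" by simp
  qed
  define S where "S = h ` V"
  have fS: "finite S" unfolding S_def using assms(2) by (rule finite_imageI)
  have cS: "card S = n" unfolding S_def using card_image[OF inj] assms(3) by simp
  have maps: "(\<lambda>s. h ` s) ` E \<subseteq> Gi S"
  proof
    fix t assume "t \<in> (\<lambda>s. h ` s) ` E"
    then obtain s where s: "s \<in> E" and ts: "t = h ` s" by blast
    obtain f g where fg0: "s = {f,g}" and fg: "f \<in> V" "g \<in> V" "adj f g" using assms(5) s by blast
    have t: "t = {h f, h g}" using ts fg0 by simp
    obtain i where fgne: "f \<noteq> g" and i: "\<bar>f - g\<bar> = 2 powi i" using fg(3) unfolding adj_def by blast
    have "(of_int \<bar>h f - h g\<bar> :: rat) = \<bar>f - g\<bar> * 2 ^ M"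
    proof -
      have "\<bar>f * 2 ^ M - g * 2 ^ M\<bar> = \<bar>(f - g) * (2::rat) ^ M\<bar>" by (simp add: left_diff_distrib)
      also have "\<dots> = \<bar>f - g\<bar> * 2 ^ M" by (simp add: abs_mult)
      finally show ?thesis using hv[OF fg(1)] hv[OF fg(2)] by simp
    qed
    then have "(of_int \<bar>h f - h g\<bar> :: rat) = 2 powi i * 2 ^ M" unfolding i .
    then have "\<exists>k::nat. \<bar>h f - h g\<bar> = 2 ^ k" by (rule powi_int[OF sym])
    then obtain k :: nat where "\<bar>h f - h g\<bar> = 2 ^ k" by (rule exE)
    moreover have "h f \<noteq> h g" by (rule inj_on_contraD[OF inj fgne fg(1) fg(2)])
    moreover have "h f \<in> S" "h g \<in> S" using fg unfolding S_def by auto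
    ultimately have "h f \<in> S \<and> h g \<in> S \<and> h f \<noteq> h g \<and> (\<exists>k::nat. \<bar>h f - h g\<bar> = 2^k)" by blast
    then show "t \<in> Gi S" unfolding Gi_def t by blast
  qed
  have injE: "inj_on (\<lambda>s. h ` s) E"
  proof (rule inj_onI)
    fix s t assume s: "s \<in> E" and t: "t \<in> E" and st: "h ` s = h ` t"
    have sub: "x \<subseteq> V" if "x \<in> E" for x
    proof -
      have "\<exists>f g. x = {f, g} \<and> f \<in> V \<and> g \<in> V \<and> adj f g" using assms(5) that by (rule bspec)
      then obtain f g where "x = {f,g}" "f \<in> V" "g \<in> V" by blast
      then show ?thesis by simp
    qed
    show "s = t" using inj_on_image_eq_iff[OF inj sub[OF s] sub[OF t]] st by simp
  qed
  have "card E = card ((\<lambda>s. h ` s) ` E)" using injE by (simp add: card_image)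
  also have "\<dots> \<le> card (Gi S)" using maps Gi_fin[OF fS] by (rule card_mono[rotated])
  also have "\<dots> \<le> R n" using main_int[OF fS] cS by simp
  also have "\<dots> = e_num n" using e_num_R by simp
  finally show ?thesis .
qed
end
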